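(* Let $q$ be a prime power, $M\geq 2$ an integer, and let $f$ be a SCIM polynomial over $\mathbb{F}_{q^2}$ of odd degree $d\geq 1$. Let $C_f\in \mathrm{U}(d,\mathbb{F}_{q^2})$ be a matrix with characteristic polynomial $f$. If there exists $\alpha\in \mathrm{U}(d,\mathbb{F}_{q^2})$ with $\alpha^M=C_f$, then $f(x^M)$ has a SCIM factor of degree $d$.
   Context: For $a\in\mathbb{F}_{q^2}$ write $\bar a=a^q$, extended coefficientwise to matrices and polynomials. Let $\Lambda_n$ be the $n\times n$ matrix with $1$'s on the antidiagonal and $0$ elsewhere; the unitary group is $\mathrm{U}(n,\mathbb{F}_{q^2})=\{A\in \mathrm{GL}(n,\mathbb{F}_{q^2}) : A\Lambda_n\bar A^{t}=\Lambda_n\}$. For a monic polynomial $f$ of degree $d$ with $f(0)\neq 0$ define $\widetilde{f}(t)=\overline{f(0)}^{-1}t^d\bar f(t^{-1})$. A SCIM polynomial is a monic polynomial $f\in\mathbb{F}_{q^2}[t]$ with $f(0)\neq0$, irreducible over $\mathbb{F}_{q^2}$, with $\widetilde f=f$. *)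

theory Defs
  imports "Jordan_Normal_Form.Char_Poly" "HOL-Computational_Algebra.Polynomial"
begin

text \<open>Conjugation a \<mapsto> a^q on F_{q^2}, extended coefficientwise.\<close>
definition qconj :: "nat \<Rightarrow> 'a::field \<Rightarrow> 'a" where
  "qconj q a = a ^ q"

definition conj_poly :: "nat \<Rightarrow> 'a::field poly \<Rightarrow> 'a poly" where
  "conj_poly q f = map_poly (qconj q) f"

definition conj_mat :: "nat \<Rightarrow> 'a::field mat \<Rightarrow> 'a mat" where
  "conj_mat q A = map_mat (qconj q) A"

definition antidiag :: "nat \<Rightarrow> 'a::field mat" where
  "antidiag n = mat n n (\<lambda>(i,j). if i + j = n - 1 then 1 else 0)"

definition unitary_group :: "nat \<Rightarrow> nat \<Rightarrow> 'a::field mat set" where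
  "unitary_group q n = {A. A \<in> carrier_mat n n \<and> det A \<noteq> 0 \<and>
      A * antidiag n * transpose_mat (conj_mat q A) = antidiag n}"

text \<open>f~(t) = conj(f(0))^{-1} t^d fbar(t^{-1}).\<close>
definition tilde_poly :: "nat \<Rightarrow> 'a::field poly \<Rightarrow> 'a poly" where
  "tilde_poly q f = Polynomial.smult (inverse (qconj q (poly f 0))) (reflect_poly (conj_poly q f))"

definition SCIM :: "nat \<Rightarrow> 'a::field poly \<Rightarrow> bool" where
  "SCIM q f \<longleftrightarrow> lead_coeff f = 1 \<and> poly f 0 \<noteq> 0 \<and> irreducible f \<and> tilde_poly q f = f"

end

theory Submission
  imports Defs "HOL-Algebra.Coset" "HOL-Number_Theory.Cong"
begin

definition msum :: "nat \<Rightarrow> 'b set \<Rightarrow> ('b \<Rightarrow> 'a::field mat) \<Rightarrow> 'a mat" where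
  "msum n S F = mat n n (\<lambda>ij. \<Sum>k\<in>S. F k $$ ij)"

lemma msum_carrier[simp]: "msum n S F \<in> carrier_mat n n"
  and msum_dim[simp]: "dim_row (msum n S F) = n" "dim_col (msum n S F) = n"
  by (auto simp: msum_def)

lemma msum_index[simp]: "i < n \<Longrightarrow> j < n \<Longrightarrow> msum n S F $$ (i,j) = (\<Sum>k\<in>S. F k $$ (i,j))"
  by (simp add: msum_def)

lemma mult_index_sum: "A \<in> carrier_mat n m \<Longrightarrow> B \<in> carrier_mat m l \<Longrightarrow> i < n \<Longrightarrow> j < l \<Longrightarrow>
  (A * B) $$ (i,j) = (\<Sum>k<m. A $$ (i,k) * B $$ (k,j))"
  by (auto simp: scalar_prod_def intro!: sum.cong)

lemma msum_mult_left:
  assumes "finite S" "A \<in> carrier_mat n n" "\<And>k. k \<in> S \<Longrightarrow> F k \<in> carrier_mat n n"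
  shows "A * msum n S F = msum n S (\<lambda>k. A * F k)"
proof (rule eq_matI)
  fix i j assume ij: "i < dim_row (msum n S (\<lambda>k. A * F k))" "j < dim_col (msum n S (\<lambda>k. A * F k))"
  hence ij: "i < n" "j < n" by auto
  have "(A * msum n S F) $$ (i,j) = (\<Sum>l<n. A $$ (i,l) * (\<Sum>k\<in>S. F k $$ (l,j)))"
    using assms ij by (subst mult_index_sum[of _ n n _ n]) auto
  also have "\<dots> = (\<Sum>k\<in>S. \<Sum>l<n. A $$ (i,l) * F k $$ (l,j))"
    by (simp add: sum_distrib_left sum.swap[of _ S])
  also have "\<dots> = msum n S (\<lambda>k. A * F k) $$ (i,j)"
    using assms ij by (auto intro!: sum.cong simp: mult_index_sum[of _ n n _ n])
  finally show "(A * msum n S F) $$ (i,j) = msum n S (\<lambda>k. A * F k) $$ (i,j)" .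
qed (use assms in auto)

lemma msum_mult_right:
  assumes "finite S" "A \<in> carrier_mat n n" "\<And>k. k \<in> S \<Longrightarrow> F k \<in> carrier_mat n n"
  shows "msum n S F * A = msum n S (\<lambda>k. F k * A)"
proof (rule eq_matI)
  fix i j assume ij: "i < dim_row (msum n S (\<lambda>k. F k * A))" "j < dim_col (msum n S (\<lambda>k. F k * A))"
  hence ij: "i < n" "j < n" by auto
  have "(msum n S F * A) $$ (i,j) = (\<Sum>l<n. (\<Sum>k\<in>S. F k $$ (i,l)) * A $$ (l,j))"
    using assms ij by (subst mult_index_sum[of _ n n _ n]) auto
  also have "\<dots> = (\<Sum>k\<in>S. \<Sum>l<n. F k $$ (i,l) * A $$ (l,j))"
    by (simp add: sum_distrib_right sum.swap[of _ S])
  also have "\<dots> = msum n S (\<lambda>k. F k * A) $$ (i,j)"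
    using assms ij by (auto intro!: sum.cong simp: mult_index_sum[of _ n n _ n])
  finally show "(msum n S F * A) $$ (i,j) = msum n S (\<lambda>k. F k * A) $$ (i,j)" .
qed (use assms in auto)

lemma pow_mat_comm: "A \<in> carrier_mat n n \<Longrightarrow> A * A ^\<^sub>m k = A ^\<^sub>m k * A"
proof (induction k)
  case 0 thus ?case by simp
next
  case (Suc k)
  have "A * A ^\<^sub>m Suc k = (A * A ^\<^sub>m k) * A" using Suc.prems by (simp add: assoc_mult_mat[of _ n n _ n _ n])
  also have "\<dots> = A ^\<^sub>m Suc k * A" using Suc by simp
  finally show ?case .
qed

lemma pow_mat_Suc': "A \<in> carrier_mat n n \<Longrightarrow> A ^\<^sub>m Suc k = A * A ^\<^sub>m k"
  by (simp add: pow_mat_comm)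

definition ev :: "'a::field poly \<Rightarrow> 'a mat \<Rightarrow> 'a mat" where
  "ev p A = msum (dim_row A) {..degree p} (\<lambda>k. coeff p k \<cdot>\<^sub>m A ^\<^sub>m k)"

lemma ev_dim[simp]: "dim_row (ev p A) = dim_row A" "dim_col (ev p A) = dim_row A"
  by (simp_all add: ev_def)

lemma ev_carrier[simp]: "A \<in> carrier_mat n n \<Longrightarrow> ev p A \<in> carrier_mat n n"
  by (simp add: ev_def)

lemma ev_bound: assumes A: "A \<in> carrier_mat n n" and N: "degree p < N"
  shows "ev p A = msum n {..<N} (\<lambda>k. coeff p k \<cdot>\<^sub>m A ^\<^sub>m k)"
proof (rule eq_matI)
  fix i j assume "i < dim_row (msum n {..<N} (\<lambda>k. coeff p k \<cdot>\<^sub>m A ^\<^sub>m k))"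
     "j < dim_col (msum n {..<N} (\<lambda>k. coeff p k \<cdot>\<^sub>m A ^\<^sub>m k))"
  hence ij: "i < n" "j < n" by auto
  show "ev p A $$ (i,j) = msum n {..<N} (\<lambda>k. coeff p k \<cdot>\<^sub>m A ^\<^sub>m k) $$ (i,j)"
    using A ij N unfolding ev_def
    by (auto intro!: sum.mono_neutral_left intro: le_degree)
qed (use A in \<open>auto simp: ev_def\<close>)

lemma ev_index: assumes A: "A \<in> carrier_mat n n" and N: "degree p < N" and ij: "i < n" "j < n"
  shows "ev p A $$ (i,j) = (\<Sum>k<N. coeff p k * (A ^\<^sub>m k) $$ (i,j))"
  using A ij by (simp add: ev_bound[OF A N])

lemma ev_add: assumes A: "A \<in> carrier_mat n n" shows "ev (p + q) A = ev p A + ev q A"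
proof -
  define N where "N = Suc (max (degree p) (degree q))"
  have N: "degree p < N" "degree q < N" "degree (p + q) < N" unfolding N_def
    using degree_add_le_max[of p q] by auto
  show ?thesis using A
    by (intro eq_matI) (auto simp: ev_index[OF A N(1)] ev_index[OF A N(2)] ev_index[OF A N(3)]
        sum.distrib algebra_simps)
qed

lemma ev_diff: assumes A: "A \<in> carrier_mat n n" shows "ev (p - q) A = ev p A - ev q A"
proof -
  define N where "N = Suc (max (degree p) (degree q))"
  have N: "degree p < N" "degree q < N" "degree (p - q) < N" unfolding N_def
    using degree_diff_le_max[of p q] by auto
  show ?thesis using A
    by (intro eq_matI) (auto simp: ev_index[OF A N(1)] ev_index[OF A N(2)] ev_index[OF A N(3)]
        sum_subtractf algebra_simps)
qed

lemma ev_smult: assumes A: "A \<in> carrier_mat n n" shows "ev (Polynomial.smult c p) A = c \<cdot>\<^sub>m ev p A"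
proof -
  define N where "N = Suc (degree p)"
  have N: "degree p < N" "degree (Polynomial.smult c p) < N" unfolding N_def by auto
  show ?thesis using A
    by (intro eq_matI) (auto simp: ev_index[OF A N(1)] ev_index[OF A N(2)] sum_distrib_left algebra_simps)
qed

lemma ev_const: assumes A: "A \<in> carrier_mat n n" shows "ev [:c:] A = c \<cdot>\<^sub>m 1\<^sub>m n"
  using A by (intro eq_matI) (auto simp: ev_index[OF A, of _ 1])

lemma ev_zero: assumes A: "A \<in> carrier_mat n n" shows "ev 0 A = 0\<^sub>m n n"
  using A by (intro eq_matI) (auto simp: ev_index[OF A, of _ 1])

lemma ev_one: assumes A: "A \<in> carrier_mat n n" shows "ev 1 A = 1\<^sub>m n"
  using A by (intro eq_matI) (auto simp: ev_index[OF A, of _ 1])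

lemma ev_pCons: assumes A: "A \<in> carrier_mat n n"
  shows "ev (pCons a p) A = a \<cdot>\<^sub>m 1\<^sub>m n + A * ev p A"
proof -
  define N where "N = Suc (degree p)"
  have N: "degree p < N" "degree (pCons a p) < Suc N" unfolding N_def by auto
  have "A * ev p A = msum n {..<N} (\<lambda>k. A * (coeff p k \<cdot>\<^sub>m A ^\<^sub>m k))"
    using A by (simp add: ev_bound[OF A N(1)] msum_mult_left)
  also have "\<dots> = msum n {..<N} (\<lambda>k. coeff p k \<cdot>\<^sub>m A ^\<^sub>m Suc k)"
    using A by (intro arg_cong[where f="msum n {..<N}"] ext)
       (simp add: mult_smult_distrib[of _ n n _ n] pow_mat_comm[of _ n])
  finally have 1: "A * ev p A = \<dots>" .
  show ?thesis unfolding 1 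
  proof (intro eq_matI)
    fix i j assume ij: "i < dim_row (a \<cdot>\<^sub>m 1\<^sub>m n + msum n {..<N} (\<lambda>k. coeff p k \<cdot>\<^sub>m A ^\<^sub>m Suc k))"
      "j < dim_col (a \<cdot>\<^sub>m 1\<^sub>m n + msum n {..<N} (\<lambda>k. coeff p k \<cdot>\<^sub>m A ^\<^sub>m Suc k))"
    hence ij: "i < n" "j < n" by auto
    have "ev (pCons a p) A $$ (i,j) = (\<Sum>k<Suc N. coeff (pCons a p) k * (A ^\<^sub>m k) $$ (i,j))"
      by (rule ev_index[OF A N(2) ij])
    also have "\<dots> = coeff (pCons a p) 0 * (A ^\<^sub>m 0) $$ (i,j) + (\<Sum>k<N. coeff (pCons a p) (Suc k) * (A ^\<^sub>m Suc k) $$ (i,j))"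
      by (rule sum.lessThan_Suc_shift)
    finally show "ev (pCons a p) A $$ (i,j) = (a \<cdot>\<^sub>m 1\<^sub>m n + msum n {..<N} (\<lambda>k. coeff p k \<cdot>\<^sub>m A ^\<^sub>m Suc k)) $$ (i,j)"
      using A ij by (simp del: pow_mat.simps(2))
  qed (use A in auto)
qed

lemma zero_smult_mat[simp]: "(0::'a::field) \<cdot>\<^sub>m B = 0\<^sub>m (dim_row B) (dim_col B)"
  by (rule eq_matI) auto

lemma one_smult_mat'[simp]: "(1::'a::field) \<cdot>\<^sub>m B = B"
  by (rule eq_matI) auto

lemma ev_mult: assumes A: "A \<in> carrier_mat n n" shows "ev (p * q) A = ev p A * ev q A"
proof (induction p rule: pCons_induct)
  case 0
  then show ?case using A by (simp add: ev_zero)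
next
  case (pCons a p)
  have E: "ev p A \<in> carrier_mat n n" "ev q A \<in> carrier_mat n n" "ev (p*q) A \<in> carrier_mat n n" using A by auto
  have "ev (pCons a p * q) A = ev (Polynomial.smult a q + pCons 0 (p*q)) A" by simp
  also have "\<dots> = a \<cdot>\<^sub>m ev q A + (0 \<cdot>\<^sub>m 1\<^sub>m n + A * ev (p*q) A)"
    using A by (simp add: ev_add ev_smult ev_pCons)
  also have "\<dots> = a \<cdot>\<^sub>m ev q A + A * (ev p A * ev q A)"
    using A E pCons.IH by simp
  also have "\<dots> = (a \<cdot>\<^sub>m 1\<^sub>m n + A * ev p A) * ev q A"
    using A E by (subst add_mult_distrib_mat[of _ n n]) (auto simp: assoc_mult_mat[of A n n "ev p A" n "ev q A" n])
  finally show ?case using A by (simp add: ev_pCons)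
qed

lemma ev_X: assumes A: "A \<in> carrier_mat n n" shows "ev [:0,1:] A = A"
  using A by (simp add: ev_pCons ev_zero)

lemma ev_power: assumes A: "A \<in> carrier_mat n n" shows "ev (p ^ k) A = ev p A ^\<^sub>m k"
  by (induction k) (use A in \<open>auto simp: ev_one ev_mult pow_mat_comm[of _ n] mult.commute\<close>)

lemma ev_monom: assumes A: "A \<in> carrier_mat n n" shows "ev (monom 1 k) A = A ^\<^sub>m k"
  using A by (simp add: monom_altdef ev_power ev_X)

lemma ev_pcompose: assumes A: "A \<in> carrier_mat n n" shows "ev (pcompose p q) A = ev p (ev q A)"
proof (induction p rule: pCons_induct)
  case 0
  then show ?case using A by (simp add: ev_zero ev_zero[OF ev_carrier[OF A]])
next
  case (pCons a p)
  have E: "ev q A \<in> carrier_mat n n" using A by auto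
  show ?case using A E pCons.IH
    by (simp add: pcompose_pCons ev_add ev_const ev_mult ev_pCons[OF E])
qed

lemma ev_comm: assumes A: "A \<in> carrier_mat n n" and B: "B \<in> carrier_mat n n" and AB: "A * B = B * A"
  shows "B * ev p A = ev p A * B"
proof (induction p rule: pCons_induct)
  case 0
  then show ?case using A B by (simp add: ev_zero)
next
  case (pCons a p)
  have E: "ev p A \<in> carrier_mat n n" using A by auto
  have "B * ev (pCons a p) A = a \<cdot>\<^sub>m B + (B * A) * ev p A"
    using A B E by (simp add: ev_pCons, subst mult_add_distrib_mat[of _ n n], auto simp: mult_smult_distrib[of _ n n] assoc_mult_mat[of B n n A n "ev p A" n])
  also have "\<dots> = a \<cdot>\<^sub>m B + A * (B * ev p A)"
    using A B E by (subst AB[symmetric]) (simp add: assoc_mult_mat[of A n n B n "ev p A" n])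
  also have "\<dots> = a \<cdot>\<^sub>m B + A * (ev p A * B)" using pCons.IH by simp
  also have "\<dots> = ev (pCons a p) A * B"
    using A B E by (simp add: ev_pCons, subst add_mult_distrib_mat[of _ n n], auto simp: mult_smult_assoc_mat[of _ n n] assoc_mult_mat[of A n n "ev p A" n B n])
  finally show ?case .
qed

lemma char_poly_matrix_index:
  assumes A: "A \<in> carrier_mat n n" and ij: "i < n" "j < n"
  shows "char_poly_matrix A $$ (i,j) = (if i = j then [:0,1:] else 0) + [:- A $$ (i,j):]"
  using A ij by (simp add: char_poly_matrix_def)

lemma CH_coeff:
  fixes A :: "'a::field mat"
  assumes A: "A \<in> carrier_mat n n" and ij: "i < n" "j < n"
  defines "Bm \<equiv> adj_mat (char_poly_matrix A)"
  shows "coeff (char_poly A) k * (if i = j then 1 else 0) =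
     (case k of 0 \<Rightarrow> 0 | Suc k' \<Rightarrow> coeff (Bm $$ (i,j)) k') - (\<Sum>l<n. A $$ (i,l) * coeff (Bm $$ (l,j)) k)"
proof -
  have P: "char_poly_matrix A \<in> carrier_mat n n" using A by simp
  have Bm: "Bm \<in> carrier_mat n n" using adj_mat(1)[OF P] by (simp add: Bm_def)
  have "(char_poly_matrix A * Bm) $$ (i,j) = (char_poly A \<cdot>\<^sub>m 1\<^sub>m n) $$ (i,j)"
    using adj_mat(2)[OF P] by (simp add: Bm_def char_poly_def)
  also have "\<dots> = char_poly A * (if i = j then 1 else 0)" using ij by simp
  finally have eq: "(\<Sum>l<n. char_poly_matrix A $$ (i,l) * Bm $$ (l,j)) = char_poly A * (if i = j then 1 else 0)"
    using P Bm ij by (simp add: mult_index_sum[OF P Bm ij])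
  have "(\<Sum>l<n. char_poly_matrix A $$ (i,l) * Bm $$ (l,j)) =
        (\<Sum>l<n. (if i = l then [:0,1:] * Bm $$ (l,j) else 0) + Polynomial.smult (- A $$ (i,l)) (Bm $$ (l,j)))"
    using A ij by (intro sum.cong) (auto simp: char_poly_matrix_index algebra_simps)
  also have "\<dots> = [:0,1:] * Bm $$ (i,j) + (\<Sum>l<n. Polynomial.smult (- A $$ (i,l)) (Bm $$ (l,j)))"
    using ij by (subst sum.distrib) (simp add: sum.delta')
  finally have eq2: "char_poly A * (if i = j then 1 else 0) = pCons 0 (Bm $$ (i,j)) + (\<Sum>l<n. Polynomial.smult (- A $$ (i,l)) (Bm $$ (l,j)))"
    using eq by simp
  have "coeff (char_poly A) k * (if i = j then 1 else 0) = coeff (char_poly A * (if i = j then 1 else 0)) k"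
    by simp
  also have "\<dots> = coeff (pCons 0 (Bm $$ (i,j))) k + (\<Sum>l<n. - A $$ (i,l) * coeff (Bm $$ (l,j)) k)"
    unfolding eq2 by (simp add: coeff_sum)
  finally show ?thesis by (cases k) (simp_all add: sum_negf)
qed

lemma cayley_hamilton:
  fixes A :: "'a::field mat"
  assumes A: "A \<in> carrier_mat n n"
  shows "ev (char_poly A) A = 0\<^sub>m n n"
proof -
  define Bm where "Bm = adj_mat (char_poly_matrix A)"
  define g where "g = char_poly A"
  define Bk where "Bk k = mat n n (\<lambda>(i,j). coeff (Bm $$ (i,j)) k)" for k
  define D where "D k = (case k of 0 \<Rightarrow> 0\<^sub>m n n | Suc k' \<Rightarrow> Bk k')" for k
  have Bk: "Bk k \<in> carrier_mat n n" for k by (simp add: Bk_def)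
  have D: "D k \<in> carrier_mat n n" for k by (cases k) (simp_all add: D_def Bk)
  have key: "coeff g k \<cdot>\<^sub>m 1\<^sub>m n = D k - A * Bk k" for k
  proof (rule eq_matI)
    fix i j assume "i < dim_row (D k - A * Bk k)" "j < dim_col (D k - A * Bk k)"
    hence ij: "i < n" "j < n" using D[of k] Bk[of k] A by auto
    have hAB: "(A * Bk k) $$ (i,j) = (\<Sum>l<n. A $$ (i,l) * Bk k $$ (l,j))"
      by (rule mult_index_sum[OF A Bk ij])
    have "(D k - A * Bk k) $$ (i,j) = D k $$ (i,j) - (\<Sum>l<n. A $$ (i,l) * Bk k $$ (l,j))"
      using ij D[of k] Bk[of k] A hAB by simp
    also have "\<dots> = (case k of 0 \<Rightarrow> 0 | Suc k' \<Rightarrow> coeff (Bm $$ (i,j)) k') - (\<Sum>l<n. A $$ (i,l) * coeff (Bm $$ (l,j)) k)"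
      using ij by (cases k) (auto simp: D_def Bk_def intro!: sum.cong)
    also have "\<dots> = coeff g k * (if i = j then 1 else 0)"
      unfolding g_def Bm_def by (rule CH_coeff[OF A ij, symmetric])
    finally show "(coeff g k \<cdot>\<^sub>m 1\<^sub>m n) $$ (i,j) = (D k - A * Bk k) $$ (i,j)" using ij by simp
  qed (use D[of k] Bk[of k] A in auto)
  define S where "S = (\<Sum>i<n. \<Sum>j<n. degree (Bm $$ (i,j)))"
  define N where "N = Suc (degree g + Suc S)"
  have degS: "degree (Bm $$ (i,j)) \<le> S" if "i < n" "j < n" for i j
  proof -
    have "degree (Bm $$ (i,j)) \<le> (\<Sum>j<n. degree (Bm $$ (i,j)))"
      using that by (intro member_le_sum) auto
    also have "\<dots> \<le> S" unfolding S_def using that by (intro member_le_sum[where i=i and A="{..<n}"]) auto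
    finally show ?thesis .
  qed
  have BkN: "Bk (degree g + Suc S) = 0\<^sub>m n n"
  proof (rule eq_matI)
    fix i j assume ij: "i < dim_row (0\<^sub>m n n :: 'a mat)" "j < dim_col (0\<^sub>m n n :: 'a mat)"
    hence "degree (Bm $$ (i,j)) \<le> S" using degS by auto
    hence "coeff (Bm $$ (i,j)) (degree g + Suc S) = 0" by (intro coeff_eq_0) auto
    thus "Bk (degree g + Suc S) $$ (i,j) = 0\<^sub>m n n $$ (i,j)" using ij by (simp add: Bk_def)
  qed (auto simp: Bk_def)
  define G where "G k = A ^\<^sub>m k * D k" for k
  have G: "G k \<in> carrier_mat n n" for k unfolding G_def by (rule mult_carrier_mat[OF pow_carrier_mat[OF A] D])
  have tm: "coeff g k \<cdot>\<^sub>m A ^\<^sub>m k = G k - G (Suc k)" for k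
  proof -
    have "coeff g k \<cdot>\<^sub>m A ^\<^sub>m k = A ^\<^sub>m k * (coeff g k \<cdot>\<^sub>m 1\<^sub>m n)"
      using A by (simp add: mult_smult_distrib[of _ n n _ n])
    also have "\<dots> = A ^\<^sub>m k * (D k - A * Bk k)" by (simp add: key)
    also have "\<dots> = A ^\<^sub>m k * D k - A ^\<^sub>m k * (A * Bk k)"
      by (rule mult_minus_distrib_mat[OF pow_carrier_mat[OF A] D mult_carrier_mat[OF A Bk]])
    also have "A ^\<^sub>m k * (A * Bk k) = A ^\<^sub>m Suc k * Bk k"
      using A Bk by (simp add: assoc_mult_mat[of "A ^\<^sub>m k" n n A n "Bk k" n])
    finally show ?thesis by (simp add: G_def D_def del: pow_mat.simps)
  qed
  have "ev g A = msum n {..<N} (\<lambda>k. coeff g k \<cdot>\<^sub>m A ^\<^sub>m k)"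
    by (rule ev_bound[OF A]) (simp add: N_def)
  also have "\<dots> = msum n {..<N} (\<lambda>k. G k - G (Suc k))" by (simp add: tm)
  also have "\<dots> = 0\<^sub>m n n"
  proof (rule eq_matI)
    fix i j assume "i < dim_row (0\<^sub>m n n :: 'a mat)" "j < dim_col (0\<^sub>m n n :: 'a mat)"
    hence ij: "i < n" "j < n" by auto
    have "msum n {..<N} (\<lambda>k. G k - G (Suc k)) $$ (i,j) = (\<Sum>k<N. G k $$ (i,j) - G (Suc k) $$ (i,j))"
      using ij G by (simp, intro sum.cong, auto simp: G[THEN carrier_matD(1)] G[THEN carrier_matD(2)])
    also have "\<dots> = G 0 $$ (i,j) - G N $$ (i,j)" by (rule sum_lessThan_telescope')
    also have "G 0 = 0\<^sub>m n n" using A by (simp add: G_def D_def)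
    also have "G N = 0\<^sub>m n n" using A by (simp add: G_def D_def N_def BkN[simplified] del: pow_mat.simps)
    finally show "msum n {..<N} (\<lambda>k. G k - G (Suc k)) $$ (i,j) = 0\<^sub>m n n $$ (i,j)" using ij by simp
  qed auto
  finally show ?thesis by (simp add: g_def)
qed

lemma irr_coprime: "irreducible (f::'a::field poly) \<Longrightarrow> \<not> f dvd p \<Longrightarrow> coprime p f"
  by (meson comm_semiring_1_class.irreducibleD' coprimeI dvd_trans)

definition Pd :: "nat \<Rightarrow> 'a::zero poly set" where "Pd e = Poly ` {xs. length xs = e}"

lemma Pd_card: "card (Pd e :: 'a::{finite,field} poly set) = card (UNIV :: 'a set) ^ e"
proof -
  have inj: "inj_on (Poly :: 'a list \<Rightarrow> 'a poly) {xs. length xs = e}"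
  proof (rule inj_onI)
    fix xs ys :: "'a list" assume xs: "xs \<in> {xs. length xs = e}" and ys: "ys \<in> {xs. length xs = e}"
      and eq: "Poly xs = Poly ys"
    show "xs = ys"
    proof (rule nth_equalityI)
      show "length xs = length ys" using xs ys by simp
      fix i assume "i < length xs"
      hence "xs ! i = coeff (Poly xs) i" "ys ! i = coeff (Poly ys) i" using xs ys
        by (simp_all add: nth_default_nth)
      thus "xs ! i = ys ! i" using eq by simp
    qed
  qed
  have "card {xs :: 'a list. length xs = e} = card (UNIV :: 'a set) ^ e"
    using card_lists_length_eq[of "UNIV :: 'a set" e] by simp
  thus ?thesis unfolding Pd_def using card_image[OF inj] by simp
qed

lemma Pd_finite: "finite (Pd e :: 'a::{finite,field} poly set)"
  unfolding Pd_def by (rule finite_imageI) (use finite_lists_length_eq[of "UNIV :: 'a set" e] in simp)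

lemma Pd_zero: "(0 :: 'a::field poly) \<in> Pd e"
  unfolding Pd_def by (rule image_eqI[of _ _ "replicate e 0"]) auto

lemma Pd_mem: assumes "degree (p :: 'a::field poly) < e" shows "p \<in> Pd e"
proof (cases "p = 0")
  case True thus ?thesis by (simp add: Pd_zero)
next
  case False
  have l: "length (coeffs p) = Suc (degree p)" using False by (simp add: length_coeffs_degree)
  show ?thesis unfolding Pd_def
    by (rule image_eqI[of _ _ "coeffs p @ replicate (e - length (coeffs p)) 0"])
       (use l assms in \<open>auto simp: Poly_append_replicate_zero\<close>)
qed

lemma Pd_deg: assumes "p \<in> Pd e" "p \<noteq> (0::'a::field poly)" shows "degree p < e"
proof -
  obtain xs where xs: "length xs = e" "p = Poly xs" using assms(1) unfolding Pd_def by auto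
  have "coeff p (degree p) \<noteq> 0" using assms(2) by simp
  hence "\<not> length xs \<le> degree p" using xs by (auto simp: nth_default_def)
  thus ?thesis using xs by simp
qed

lemma vec_of_list_carrier: "length xs = n \<Longrightarrow> vec_of_list xs \<in> carrier_vec n"
  unfolding carrier_vec_def by (simp only: mem_Collect_eq dim_vec_of_list)

lemma carrier_vec_eq_image: "carrier_vec n = vec_of_list ` {xs :: 'a list. length xs = n}"
proof (intro equalityI subsetI)
  fix v :: "'a vec" assume "v \<in> carrier_vec n"
  hence l: "length (list_of_vec v) = n" by simp
  show "v \<in> vec_of_list ` {xs. length xs = n}"
  proof (rule image_eqI[of _ _ "list_of_vec v"])
    show "v = vec_of_list (list_of_vec v)" by (simp add: vec_list)
    show "list_of_vec v \<in> {xs. length xs = n}" using l by simp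
  qed
next
  fix v :: "'a vec" assume "v \<in> vec_of_list ` {xs. length xs = n}"
  then obtain xs where "length xs = n" "v = vec_of_list xs" by (rule imageE) simp
  thus "v \<in> carrier_vec n" using vec_of_list_carrier[of xs n] by simp
qed

lemma vec_of_list_inj: "inj_on (vec_of_list :: 'a list \<Rightarrow> 'a vec) {xs. length xs = n}"
  by (rule inj_on_inverseI[where g=list_of_vec]) (simp add: list_vec)

lemma lists_card: "card {xs :: 'a::finite list. length xs = n} = card (UNIV :: 'a set) ^ n"
  using card_lists_length_eq[of "UNIV :: 'a set" n] by simp

lemma lists_finite: "finite {xs :: 'a::finite list. length xs = n}" 
  using finite_lists_length_eq[of "UNIV :: 'a set" n] by simp

lemma carrier_vec_card: "card (carrier_vec n :: 'a::finite vec set) = card (UNIV :: 'a set) ^ n"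
proof -
  have "card (carrier_vec n :: 'a vec set) = card (vec_of_list ` {xs :: 'a list. length xs = n})"
    by (simp only: carrier_vec_eq_image)
  also have "\<dots> = card {xs :: 'a list. length xs = n}" by (rule card_image[OF vec_of_list_inj])
  also have "\<dots> = card (UNIV :: 'a set) ^ n" by (rule lists_card)
  finally show ?thesis .
qed

lemma carrier_vec_finite: "finite (carrier_vec n :: 'a::finite vec set)"
  by (simp only: carrier_vec_eq_image) (rule finite_imageI[OF lists_finite])

lemma mat_unit_vec_index: "(A :: 'a::field mat) \<in> carrier_mat n n \<Longrightarrow> j < n \<Longrightarrow> i < n \<Longrightarrow> (A *\<^sub>v unit_vec n j) $ i = A $$ (i,j)"
proof -
  assume a: "A \<in> carrier_mat n n" "j < n" "i < n"
  have "(A *\<^sub>v unit_vec n j) $ i = (\<Sum>k = 0..<n. A $$ (i, k) * (if k = j then 1 else 0))"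
    using a by (simp add: scalar_prod_def unit_vec_def)
  also have "\<dots> = (\<Sum>k = 0..<n. if k = j then A $$ (i, k) else 0)" by (intro sum.cong) auto
  also have "\<dots> = A $$ (i,j)" using a by simp
  finally show ?thesis .
qed

lemma mat_eq_by_vec:
  assumes A: "(A :: 'a::field mat) \<in> carrier_mat n n" and B: "B \<in> carrier_mat n n"
    and eq: "\<And>w. w \<in> carrier_vec n \<Longrightarrow> A *\<^sub>v w = B *\<^sub>v w"
  shows "A = B"
proof (rule eq_matI)
  fix i j assume "i < dim_row B" "j < dim_col B"
  hence ij: "i < n" "j < n" using B by auto
  have "A $$ (i,j) = (A *\<^sub>v unit_vec n j) $ i" using mat_unit_vec_index[OF A ij(2,1)] by simp
  also have "\<dots> = (B *\<^sub>v unit_vec n j) $ i" using eq[of "unit_vec n j"] by simp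
  also have "\<dots> = B $$ (i,j)" using mat_unit_vec_index[OF B ij(2,1)] by simp
  finally show "A $$ (i,j) = B $$ (i,j)" .
qed (use A B in \<open>simp_all add: carrier_matD\<close>)

lemma bezout_irr:
  fixes f p :: "'a::field poly"
  assumes irr: "irreducible f" and nd: "\<not> f dvd p"
  shows "\<exists>u v. u * p + v * f = 1"
proof -
  define I where "I = {u * p + v * f | u v. True}"
  have fI: "f \<in> I" unfolding I_def by (intro CollectI exI[of _ 0] exI[of _ 1]) simp
  have pI: "p \<in> I" unfolding I_def by (intro CollectI exI[of _ 1] exI[of _ 0]) simp
  have f0: "f \<noteq> 0" using irr by auto
  have mulI: "a * h \<in> I" if hI: "h \<in> I" for a h
  proof -
    obtain u v where "h = u * p + v * f" using hI unfolding I_def by blast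
    hence "a * h = (a * u) * p + (a * v) * f" by (simp add: algebra_simps)
    thus ?thesis unfolding I_def by blast
  qed
  have diffI: "h1 - h2 \<in> I" if h12: "h1 \<in> I" "h2 \<in> I" for h1 h2
  proof -
    obtain u1 v1 where 1: "h1 = u1 * p + v1 * f" using h12(1) unfolding I_def by blast
    obtain u2 v2 where 2: "h2 = u2 * p + v2 * f" using h12(2) unfolding I_def by blast
    have "h1 - h2 = (u1 - u2) * p + (v1 - v2) * f" unfolding 1 2 by (simp add: algebra_simps)
    thus ?thesis unfolding I_def by blast
  qed
  obtain g where g: "g \<in> I" "g \<noteq> 0" and gmin: "\<And>h. h \<in> I \<and> h \<noteq> 0 \<Longrightarrow> degree g \<le> degree h"
    using ex_has_least_nat[of "\<lambda>h. h \<in> I \<and> h \<noteq> 0" f degree] fI f0 by blast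
  have gdvd: "g dvd h" if hI: "h \<in> I" for h
  proof -
    have "h mod g = h - (h div g) * g" by (simp add: minus_div_mult_eq_mod)
    hence mI: "h mod g \<in> I" using diffI[OF hI mulI[OF g(1)]] by simp
    have "h mod g = 0"
    proof (rule ccontr)
      assume ne: "h mod g \<noteq> 0"
      have "degree (h mod g) < degree g" by (rule degree_mod_less'[OF g(2) ne])
      thus False using gmin[of "h mod g"] mI ne by simp
    qed
    thus ?thesis by (simp add: mod_0_imp_dvd)
  qed
  obtain k where fk: "f = g * k" using gdvd[OF fI] by (elim dvdE) auto
  have "is_unit g \<or> is_unit k" using irreducibleD[OF irr fk] .
  moreover have "\<not> is_unit k"
  proof
    assume "is_unit k"
    then obtain k' where k': "1 = k * k'" by (elim dvdE) auto
    have "g = g * (k * k')" using k' by simp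
    also have "\<dots> = f * k'" using fk by (simp add: mult.assoc)
    finally have "f dvd g" by (intro dvdI)
    hence "f dvd p" using gdvd[OF pI] by (rule dvd_trans)
    thus False using nd by simp
  qed
  ultimately have "is_unit g" by blast
  then obtain w where w: "1 = g * w" by (elim dvdE) auto
  obtain u v where "g = u * p + v * f" using g(1) unfolding I_def by blast
  hence "(w * u) * p + (w * v) * f = 1" using w by (simp add: algebra_simps)
  thus ?thesis by blast
qed

locale cfield =
  fixes C :: "'a::{finite,field} mat" and f :: "'a poly" and n :: nat
  assumes C: "C \<in> carrier_mat n n" and fC: "ev f C = 0\<^sub>m n n" and irr: "irreducible f"
    and degf: "degree f = n" and npos: "n > 0"
begin

lemma one_neq_zero_mat: "1\<^sub>m n \<noteq> (0\<^sub>m n n :: 'a mat)"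
proof
  assume "1\<^sub>m n = (0\<^sub>m n n :: 'a mat)"
  hence "(1\<^sub>m n :: 'a mat) $$ (0,0) = 0\<^sub>m n n $$ (0,0)" by simp
  thus False using npos by simp
qed

lemma dvd_imp_zero: assumes "f dvd p" shows "ev p C = 0\<^sub>m n n"
proof -
  obtain k where k: "p = f * k" using assms by (elim dvdE) auto
  show ?thesis unfolding k using C by (simp add: ev_mult[OF C] fC)
qed

lemma inv: assumes "\<not> f dvd p" shows "\<exists>U \<in> carrier_mat n n. U * ev p C = 1\<^sub>m n"
proof -
  obtain u v where "u * p + v * f = 1" using bezout_irr[OF irr assms] by blast
  hence "ev (u * p + v * f) C = 1\<^sub>m n" using ev_one[OF C] by simp
  hence "ev u C * ev p C + ev v C * ev f C = 1\<^sub>m n" using C by (simp add: ev_add[OF C] ev_mult[OF C])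
  moreover have "ev u C * ev p C \<in> carrier_mat n n" using C by (intro mult_carrier_mat[of _ n n]) auto
  ultimately have "ev u C * ev p C = 1\<^sub>m n" using C by (simp add: fC)
  thus ?thesis using C by (intro bexI[of _ "ev u C"]) auto
qed

lemma zero_imp_dvd: assumes "ev p C = 0\<^sub>m n n" shows "f dvd p"
proof (rule ccontr)
  assume "\<not> f dvd p"
  then obtain U where U: "U \<in> carrier_mat n n" "U * ev p C = 1\<^sub>m n" using inv by blast
  hence "1\<^sub>m n = (0\<^sub>m n n :: 'a mat)" using assms by simp
  thus False using one_neq_zero_mat by simp
qed

lemma Pd_diff_dvd: assumes "p \<in> Pd n" "p' \<in> Pd n" "f dvd (p - p')" shows "p = p'"
proof (rule ccontr)
  assume ne: "p \<noteq> p'"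
  hence nz: "p - p' \<noteq> 0" by simp
  have "degree (p - p') < n"
  proof -
    have "degree p < n" using assms(1) Pd_deg[of p n] npos by (cases "p = 0") auto
    moreover have "degree p' < n" using assms(2) Pd_deg[of p' n] npos by (cases "p' = 0") auto
    ultimately show ?thesis using degree_diff_le_max[of p p'] by linarith
  qed
  moreover have "degree f \<le> degree (p - p')" using dvd_imp_degree_le[OF assms(3) nz] .
  ultimately show False using degf by simp
qed

lemma inj_Pd: "inj_on (\<lambda>p. ev p C) (Pd n)"
proof (rule inj_onI)
  fix p p' assume pp: "p \<in> Pd n" "p' \<in> Pd n" and eq: "ev p C = ev p' C"
  have "ev (p - p') C = 0\<^sub>m n n" using C by (simp add: ev_diff[OF C] eq)
  thus "p = p'" using Pd_diff_dvd[OF pp zero_imp_dvd] by simp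
qed

lemma card_K: "card ((\<lambda>p. ev p C) ` Pd n) = card (UNIV :: 'a set) ^ n"
  using card_image[OF inj_Pd] Pd_card by simp

lemma vec_surj: assumes v: "v \<in> carrier_vec n" "v \<noteq> 0\<^sub>v n"
  shows "(\<lambda>p. ev p C *\<^sub>v v) ` Pd n = carrier_vec n"
proof -
  have inj: "inj_on (\<lambda>p. ev p C *\<^sub>v v) (Pd n)"
  proof (rule inj_onI)
    fix p p' assume pp: "p \<in> Pd n" "p' \<in> Pd n" and eq: "ev p C *\<^sub>v v = ev p' C *\<^sub>v v"
    show "p = p'"
    proof (rule ccontr)
      assume ne: "p \<noteq> p'"
      have "\<not> f dvd (p - p')" using Pd_diff_dvd[OF pp] ne by blast
      then obtain U where U: "U \<in> carrier_mat n n" "U * ev (p - p') C = 1\<^sub>m n" using inv by blast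
      have "ev (p - p') C *\<^sub>v v = ev p C *\<^sub>v v - ev p' C *\<^sub>v v"
        using C v by (simp add: ev_diff[OF C] minus_mult_distrib_mat_vec[of _ n n])
      also have "\<dots> = 0\<^sub>v n" unfolding eq using C v by (intro eq_vecI) auto
      finally have z: "ev (p - p') C *\<^sub>v v = 0\<^sub>v n" .
      have "v = (U * ev (p - p') C) *\<^sub>v v" using U v by simp
      also have "\<dots> = U *\<^sub>v (ev (p - p') C *\<^sub>v v)" using U C v
        by (intro assoc_mult_mat_vec[of _ n n _ n]) auto
      also have "\<dots> = 0\<^sub>v n" unfolding z using U by (intro eq_vecI) (auto simp: scalar_prod_def)
      finally show False using v by simp
    qed
  qed
  have sub: "(\<lambda>p. ev p C *\<^sub>v v) ` Pd n \<subseteq> carrier_vec n" using C v by (auto intro!: mult_mat_vec_carrier[of _ n n])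
  have "card ((\<lambda>p. ev p C *\<^sub>v v) ` Pd n) = card (carrier_vec n :: 'a vec set)"
  proof -
    have "card (Pd n :: 'a poly set) = card (UNIV :: 'a set) ^ n" by (rule Pd_card)
    moreover have "card (carrier_vec n :: 'a vec set) = card (UNIV :: 'a set) ^ n" by (rule carrier_vec_card)
    ultimately show ?thesis using card_image[OF inj] by simp
  qed
  thus ?thesis using card_subset_eq[OF carrier_vec_finite sub] by simp
qed

lemma commutant: assumes a: "\<alpha> \<in> carrier_mat n n" and com: "\<alpha> * C = C * \<alpha>"
  shows "\<exists>p0. \<alpha> = ev p0 C"
proof -
  define v :: "'a vec" where "v = unit_vec n 0"
  have v: "v \<in> carrier_vec n" "v \<noteq> 0\<^sub>v n" using npos by (auto simp: v_def)
  have "\<alpha> *\<^sub>v v \<in> carrier_vec n" using a v by (intro mult_mat_vec_carrier[of _ n n])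
  hence "\<alpha> *\<^sub>v v \<in> (\<lambda>p. ev p C *\<^sub>v v) ` Pd n" by (simp only: vec_surj[OF v])
  then obtain p0 where p0: "\<alpha> *\<^sub>v v = ev p0 C *\<^sub>v v" "p0 \<in> Pd n" by (rule imageE)
  have E: "ev p C \<in> carrier_mat n n" for p using C by simp
  have comm: "\<alpha> * ev p C = ev p C * \<alpha>" for p using ev_comm[OF C a com[symmetric]] .
  have "\<alpha> = ev p0 C"
  proof (rule mat_eq_by_vec[OF a E])
    fix w :: "'a vec" assume w: "w \<in> carrier_vec n"
    hence "w \<in> (\<lambda>p. ev p C *\<^sub>v v) ` Pd n" by (simp only: vec_surj[OF v])
    then obtain p where p: "w = ev p C *\<^sub>v v" "p \<in> Pd n" by (rule imageE)
    have "\<alpha> *\<^sub>v w = (\<alpha> * ev p C) *\<^sub>v v" unfolding p using a E v by (simp add: assoc_mult_mat_vec[of _ n n _ n])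
    also have "\<dots> = (ev p C * \<alpha>) *\<^sub>v v" by (simp add: comm)
    also have "\<dots> = ev p C *\<^sub>v (ev p0 C *\<^sub>v v)" using a E v p0 by (simp add: assoc_mult_mat_vec[of _ n n _ n])
    also have "\<dots> = (ev p C * ev p0 C) *\<^sub>v v" using E v by (simp add: assoc_mult_mat_vec[of _ n n _ n])
    also have "ev p C * ev p0 C = ev p0 C * ev p C" using C by (simp add: ev_mult[OF C, symmetric] mult.commute)
    also have "(ev p0 C * ev p C) *\<^sub>v v = ev p0 C *\<^sub>v w" unfolding p using E v by (simp add: assoc_mult_mat_vec[of _ n n _ n])
    finally show "\<alpha> *\<^sub>v w = ev p0 C *\<^sub>v w" .
  qed
  thus ?thesis by blast
qed

lemma no_small_annihilator:
  assumes a: "\<alpha> \<in> carrier_mat n n" and aM: "ev (monom 1 M) \<alpha> = C"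
    and r: "r \<noteq> 0" "degree r < n" "ev r \<alpha> = 0\<^sub>m n n"
  shows False
proof -
  have red: "ev s \<alpha> = ev (s mod r) \<alpha>" for s
  proof -
    have 1: "ev s \<alpha> = ev ((s div r) * r) \<alpha> + ev (s mod r) \<alpha>"
      using ev_add[OF a, of "(s div r) * r" "s mod r"] by simp
    have 2: "ev ((s div r) * r) \<alpha> = 0\<^sub>m n n" using a r by (simp add: ev_mult[OF a])
    show ?thesis unfolding 1 2 using a by simp
  qed
  have modPd: "s mod r \<in> Pd (degree r)" for s
  proof (cases "s mod r = 0")
    case True thus ?thesis by (simp add: Pd_zero)
  next
    case False
    thus ?thesis using degree_mod_less'[OF r(1) False] by (intro Pd_mem)
  qed
  have "(\<lambda>p. ev p C) ` Pd n \<subseteq> (\<lambda>s. ev s \<alpha>) ` Pd (degree r)"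
  proof
    fix X assume "X \<in> (\<lambda>p. ev p C) ` Pd n"
    then obtain p where X: "X = ev p C" "p \<in> Pd n" by (rule imageE)
    have "X = ev (pcompose p (monom 1 M)) \<alpha>" unfolding X using ev_pcompose[OF a] aM by simp
    also have "\<dots> = ev (pcompose p (monom 1 M) mod r) \<alpha>" by (rule red)
    finally have X': "X = ev (pcompose p (monom 1 M) mod r) \<alpha>" .
    show "X \<in> (\<lambda>s. ev s \<alpha>) ` Pd (degree r)" by (rule image_eqI[where f="\<lambda>s. ev s \<alpha>", OF X' modPd])
  qed
  hence "card ((\<lambda>p. ev p C) ` Pd n) \<le> card ((\<lambda>s. ev s \<alpha>) ` Pd (degree r))"
    by (intro card_mono finite_imageI Pd_finite)
  also have "\<dots> \<le> card (Pd (degree r) :: 'a poly set)" by (intro card_image_le Pd_finite)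
  also have "card (Pd (degree r) :: 'a poly set) = card (UNIV :: 'a set) ^ degree r" by (rule Pd_card)
  finally have "card (UNIV :: 'a set) ^ n \<le> card (UNIV :: 'a set) ^ degree r"
    using card_K by simp
  moreover have Q2: "card (UNIV :: 'a set) \<ge> 2"
  proof -
    have "{0, 1::'a} \<subseteq> UNIV" by simp
    hence "card {0, 1::'a} \<le> card (UNIV :: 'a set)" by (intro card_mono) auto
    thus ?thesis by simp
  qed
  moreover have "card (UNIV :: 'a set) ^ degree r < card (UNIV :: 'a set) ^ n"
    by (rule power_strict_increasing) (use r(2) Q2 in auto)
  ultimately show False by linarith
qed

end

lemma map_mat_add: "A \<in> carrier_mat n m \<Longrightarrow> B \<in> carrier_mat n m \<Longrightarrow> (\<And>x y. h (x + y) = h x + h y) \<Longrightarrow>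
  map_mat h (A + B) = map_mat h A + map_mat h B"
  by (rule eq_matI) auto

lemma ev_hom:
  fixes h :: "'a::field \<Rightarrow> 'a"
  assumes h: "comm_ring_hom h" and A: "A \<in> carrier_mat n n"
  shows "map_mat h (ev p A) = ev (map_poly h p) (map_mat h A)"
proof -
  interpret comm_ring_hom h by fact
  have hA: "map_mat h A \<in> carrier_mat n n" using A by simp
  show ?thesis
  proof (induction p rule: pCons_induct)
    case 0
    show ?case using A hA by (simp add: ev_zero[OF A] ev_zero[OF hA]) (rule eq_matI, auto)
  next
    case (pCons a p)
    have E: "ev p A \<in> carrier_mat n n" using A by simp
    have "map_mat h (ev (pCons a p) A) = map_mat h (a \<cdot>\<^sub>m 1\<^sub>m n) + map_mat h (A * ev p A)"
      unfolding ev_pCons[OF A] by (rule map_mat_add[of _ n n]) (use A E in \<open>auto simp: hom_add\<close>)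
    also have "map_mat h (a \<cdot>\<^sub>m 1\<^sub>m n) = h a \<cdot>\<^sub>m 1\<^sub>m n" by (rule eq_matI) auto
    also have "map_mat h (A * ev p A) = map_mat h A * map_mat h (ev p A)" by (rule mat_hom_mult[OF A E])
    also have "map_mat h (ev p A) = ev (map_poly h p) (map_mat h A)" by (rule pCons.IH)
    also have "h a \<cdot>\<^sub>m 1\<^sub>m n + map_mat h A * ev (map_poly h p) (map_mat h A) = ev (map_poly h (pCons a p)) (map_mat h A)"
      by (simp add: Polynomial.map_poly_pCons[where f=h, OF hom_zero] ev_pCons[OF hA])
    finally show ?case .
  qed
qed

lemma ev_transpose: assumes A: "A \<in> carrier_mat n n"
  shows "ev p (transpose_mat A) = transpose_mat (ev p A)"
proof (induction p rule: pCons_induct)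
  case 0
  have At: "transpose_mat A \<in> carrier_mat n n" using A by simp
  show ?case using A by (auto simp: ev_zero[OF A] ev_zero[OF At] intro!: eq_matI)
next
  case (pCons a p)
  have At: "transpose_mat A \<in> carrier_mat n n" using A by simp
  have E: "ev p A \<in> carrier_mat n n" using A by simp
  have "ev (pCons a p) (transpose_mat A) = a \<cdot>\<^sub>m 1\<^sub>m n + transpose_mat A * transpose_mat (ev p A)"
    by (simp add: ev_pCons[OF At] pCons.IH)
  also have "transpose_mat A * transpose_mat (ev p A) = transpose_mat (ev p A * A)"
    by (rule transpose_mult[OF E A, symmetric])
  also have "ev p A * A = A * ev p A" using ev_comm[OF A A refl] by simp
  also have "a \<cdot>\<^sub>m 1\<^sub>m n + transpose_mat (A * ev p A) = transpose_mat (a \<cdot>\<^sub>m 1\<^sub>m n + A * ev p A)"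
    using A E by (intro eq_matI) auto
  finally show ?case by (simp add: ev_pCons[OF A])
qed

lemma ev_similar:
  assumes A: "A \<in> carrier_mat n n" and S: "S \<in> carrier_mat n n" and S': "S' \<in> carrier_mat n n"
    and SS: "S * S' = 1\<^sub>m n" and SS': "S' * S = 1\<^sub>m n"
  shows "ev p (S * A * S') = S * ev p A * S'"
proof (induction p rule: pCons_induct)
  case 0
  have B: "S * A * S' \<in> carrier_mat n n" using A S S' by (intro mult_carrier_mat[of _ n n]) auto
  show ?case unfolding ev_zero[OF B] ev_zero[OF A] using A S S' by (auto intro!: eq_matI)
next
  case (pCons a p)
  have B: "S * A * S' \<in> carrier_mat n n" using A S S' by (intro mult_carrier_mat[of _ n n]) auto
  have E: "ev p A \<in> carrier_mat n n" using A by simp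
  have SA: "S * A \<in> carrier_mat n n" using S A by (intro mult_carrier_mat[of _ n n]) auto
  have SE: "S * ev p A \<in> carrier_mat n n" using S E by (intro mult_carrier_mat[of _ n n]) auto
  have SAE: "S * A * ev p A \<in> carrier_mat n n" by (rule mult_carrier_mat[OF SA E])
  have "(S * A * S') * (S * ev p A * S') = S * A * (S' * (S * ev p A * S'))"
    by (rule assoc_mult_mat[OF SA S' mult_carrier_mat[OF SE S']])
  also have "S' * (S * ev p A * S') = (S' * S) * ev p A * S'"
    using S S' E by (simp add: assoc_mult_mat[OF S' S E] assoc_mult_mat[OF S' SE S'] assoc_mult_mat[OF S E S'])
  also have "\<dots> = ev p A * S'" using SS' by (simp add: left_mult_one_mat[OF E])
  also have "S * A * (ev p A * S') = S * A * ev p A * S'" by (rule assoc_mult_mat[OF SA E S', symmetric])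
  finally have 1: "(S * A * S') * (S * ev p A * S') = S * A * ev p A * S'" .
  have "ev (pCons a p) (S * A * S') = a \<cdot>\<^sub>m 1\<^sub>m n + (S * A * S') * (S * ev p A * S')"
    by (simp add: ev_pCons[OF B] pCons.IH)
  also have "\<dots> = a \<cdot>\<^sub>m 1\<^sub>m n + S * A * ev p A * S'" by (simp only: 1)
  also have "\<dots> = S * (a \<cdot>\<^sub>m 1\<^sub>m n + A * ev p A) * S'"
  proof -
    have "S * (a \<cdot>\<^sub>m 1\<^sub>m n + A * ev p A) = a \<cdot>\<^sub>m S + S * (A * ev p A)"
      using S A E by (subst mult_add_distrib_mat[of _ n n]) (auto simp: mult_smult_distrib[of _ n n])
    also have "S * (A * ev p A) = S * A * ev p A" by (rule assoc_mult_mat[OF S A E, symmetric])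
    finally have 2: "S * (a \<cdot>\<^sub>m 1\<^sub>m n + A * ev p A) = a \<cdot>\<^sub>m S + S * A * ev p A" .
    have "(a \<cdot>\<^sub>m S + S * A * ev p A) * S' = (a \<cdot>\<^sub>m S) * S' + S * A * ev p A * S'"
      by (rule add_mult_distrib_mat[OF _ SAE S']) (use S in simp)
    also have "(a \<cdot>\<^sub>m S) * S' = a \<cdot>\<^sub>m 1\<^sub>m n" using S S' SS by (simp add: mult_smult_assoc_mat[OF S S'])
    finally show ?thesis unfolding 2 by simp
  qed
  finally show ?case by (simp add: ev_pCons[OF A])
qed

lemma ev_monom_c: assumes A: "A \<in> carrier_mat n n" shows "ev (monom c k) A = c \<cdot>\<^sub>m A ^\<^sub>m k"
proof -
  have "monom c k = Polynomial.smult c (monom 1 k)" by (simp add: smult_monom)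
  thus ?thesis using A by (simp add: ev_smult[OF A] ev_monom[OF A])
qed

lemma ev_reflect:
  assumes a: "\<alpha> \<in> carrier_mat n n" and b: "\<beta> \<in> carrier_mat n n" and ab: "\<alpha> * \<beta> = 1\<^sub>m n"
  shows "ev (reflect_poly p) \<alpha> = \<alpha> ^\<^sub>m (degree p) * ev p \<beta>"
proof (induction p rule: pCons_induct)
  case 0
  show ?case using a b by (simp add: ev_zero[OF a] ev_zero[OF b])
next
  case (pCons c p)
  show ?case
  proof (cases "p = 0")
    case True
    thus ?thesis using a b by (simp add: ev_const[OF a] ev_const[OF b])
  next
    case False
    have E: "ev p \<beta> \<in> carrier_mat n n" using b by simp
    have P: "\<alpha> ^\<^sub>m degree p \<in> carrier_mat n n" using a by simp
    have "ev (reflect_poly (pCons c p)) \<alpha> = \<alpha> ^\<^sub>m degree p * ev p \<beta> + c \<cdot>\<^sub>m \<alpha> ^\<^sub>m Suc (degree p)"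
      using False by (simp add: reflect_poly_pCons' ev_add[OF a] pCons.IH ev_monom_c[OF a] del: pow_mat.simps)
    also have "\<dots> = \<alpha> ^\<^sub>m Suc (degree p) * (c \<cdot>\<^sub>m 1\<^sub>m n + \<beta> * ev p \<beta>)"
    proof -
      have "\<alpha> ^\<^sub>m Suc (degree p) * (c \<cdot>\<^sub>m 1\<^sub>m n + \<beta> * ev p \<beta>) =
            c \<cdot>\<^sub>m \<alpha> ^\<^sub>m Suc (degree p) + \<alpha> ^\<^sub>m Suc (degree p) * (\<beta> * ev p \<beta>)"
        using a b E by (subst mult_add_distrib_mat[of _ n n]) (auto simp: mult_smult_distrib[of _ n n] del: pow_mat.simps)
      also have "\<alpha> ^\<^sub>m Suc (degree p) * (\<beta> * ev p \<beta>) = (\<alpha> ^\<^sub>m degree p * \<alpha> * \<beta>) * ev p \<beta>"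
        using a b E P by (simp add: assoc_mult_mat[OF mult_carrier_mat[OF P a] b E])
      also have "\<alpha> ^\<^sub>m degree p * \<alpha> * \<beta> = \<alpha> ^\<^sub>m degree p" using P a b ab by (simp add: assoc_mult_mat[OF P a b])
      finally have eq: "\<alpha> ^\<^sub>m Suc (degree p) * (c \<cdot>\<^sub>m 1\<^sub>m n + \<beta> * ev p \<beta>) =
        c \<cdot>\<^sub>m \<alpha> ^\<^sub>m Suc (degree p) + \<alpha> ^\<^sub>m degree p * ev p \<beta>" .
      show ?thesis unfolding eq by (rule comm_add_mat[of _ n n]) (use mult_carrier_mat[OF P E] a in \<open>auto simp del: pow_mat.simps\<close>)
    qed
    also have "\<dots> = \<alpha> ^\<^sub>m degree (pCons c p) * ev (pCons c p) \<beta>"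
      using False by (simp add: ev_pCons[OF b] del: pow_mat.simps)
    finally show ?thesis .
  qed
qed

lemma CHAR_dvd_CARD: "CHAR('a::ring_1) dvd card (UNIV :: 'a set)"
proof (cases "card (UNIV :: 'a set) = 0")
  case False
  hence [intro]: "CHAR('a) > 0"
    by (simp add: card_eq_0_iff finite_imp_CHAR_pos)    
  define G where "G = \<lparr> carrier = (UNIV :: 'a set), monoid.mult = (+), one = (0 :: 'a) \<rparr>"
  define H where "H = (of_nat ` {..<CHAR('a)} :: 'a set)"
  interpret group G
  proof (rule groupI)
    fix x assume x: "x \<in> carrier G"
    show "\<exists>y\<in>carrier G. y \<otimes>\<^bsub>G\<^esub> x = \<one>\<^bsub>G\<^esub>"
      by (intro bexI[of _ "-x"]) (auto simp: G_def)
  qed (auto simp: G_def add_ac)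

  interpret subgroup H G
  proof
    show "\<one>\<^bsub>G\<^esub> \<in> H"
      using False unfolding G_def H_def by force
  next
    fix x y :: 'a
    assume "x \<in> H" "y \<in> H"
    then obtain x' y' where [simp]: "x = of_nat x'" "y = of_nat y'"
      by (auto simp: H_def)
    have "x + y = of_nat ((x' + y') mod CHAR('a))"
      by (auto simp flip: of_nat_add simp: of_nat_eq_iff_cong_CHAR)
    moreover have "(x' + y') mod CHAR('a) < CHAR('a)"
      using H_def \<open>y \<in> H\<close> by fastforce
    ultimately show "x \<otimes>\<^bsub>G\<^esub> y \<in> H"
      by (auto simp: H_def G_def intro!: imageI)
  next
    fix x :: 'a
    assume x: "x \<in> H"
    then obtain x' where [simp]: "x = of_nat x'" and x': "x' < CHAR('a)"
      by (auto simp: H_def)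
    have "CHAR('a) dvd x' + (CHAR('a) - x') mod CHAR('a)"
      using mod_eq_0_iff_dvd mod_if x' by fastforce
    hence "x + of_nat ((CHAR('a) - x') mod CHAR('a)) = 0"
      by (auto simp flip: of_nat_add simp: of_nat_eq_0_iff_char_dvd)
    moreover from this have "inv\<^bsub>G\<^esub> x = of_nat ((CHAR('a) - x') mod CHAR('a))"
      by (intro inv_equality) (auto simp: G_def add_ac)
    moreover have "of_nat ((CHAR('a) - x') mod CHAR('a)) \<in> H"
      unfolding H_def using \<open>CHAR('a) > 0\<close> by (intro imageI) auto
    ultimately show "inv\<^bsub>G\<^esub> x \<in> H" by force
  qed (auto simp: G_def H_def)

  have "card H dvd card (rcosets\<^bsub>G\<^esub> H) * card H"
    by simp
  also have "card (rcosets\<^bsub>G\<^esub> H) * card H = Coset.order G"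
  proof (rule lagrange_finite)
    show "finite (carrier G)"
      using False card_ge_0_finite by (auto simp: G_def)
  qed (fact is_subgroup)
  finally have "card H dvd card (UNIV :: 'a set)"
    by (simp add: Coset.order_def G_def)
  also have "card H = card {..<CHAR('a)}"
    unfolding H_def by (intro card_image inj_onI) (auto simp: of_nat_eq_iff_cong_CHAR cong_def)
  finally show "CHAR('a) dvd card (UNIV :: 'a set)"
    by simp
qed auto


lemma antidiag_sq: "antidiag n * antidiag n = (1\<^sub>m n :: 'a::field mat)"
proof (rule eq_matI)
  fix i j assume "i < dim_row (1\<^sub>m n :: 'a mat)" "j < dim_col (1\<^sub>m n :: 'a mat)"
  hence ij: "i < n" "j < n" by auto
  have L: "antidiag n \<in> carrier_mat n n" by (simp add: antidiag_def)
  have "(antidiag n * antidiag n :: 'a mat) $$ (i,j) = (\<Sum>k<n. antidiag n $$ (i,k) * antidiag n $$ (k,j))"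
    by (rule mult_index_sum[OF L L ij])
  also have "\<dots> = (\<Sum>k<n. if k = n - 1 - i then (if i = j then 1 else 0) else (0::'a))"
    using ij by (intro sum.cong) (auto simp: antidiag_def)
  also have "\<dots> = (if i = j then 1 else 0)" using ij by simp
  finally show "(antidiag n * antidiag n :: 'a mat) $$ (i,j) = (1\<^sub>m n :: 'a mat) $$ (i,j)" using ij by simp
qed (auto simp: antidiag_def)

lemma frob_hom:
  assumes "\<exists>p k. prime p \<and> k \<ge> 1 \<and> q = p ^ k" and "card (UNIV :: 'a::{finite,field} set) = q ^ 2"
  shows "comm_ring_hom (\<lambda>a::'a. a ^ q)"
proof -
  obtain p k where pk: "prime p" "k \<ge> 1" "q = p ^ k" using assms(1) by blast
  have pos: "CHAR('a) > 0" by (rule finite_imp_CHAR_pos) simp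
  have pr: "prime CHAR('a)" using prime_CHAR_semidom[OF pos] .
  have "CHAR('a) dvd p ^ (k * 2)" using CHAR_dvd_CARD[where 'a='a] assms(2) pk(3) by (simp add: power_mult)
  hence "CHAR('a) dvd p" using pr prime_dvd_power by blast
  hence ch: "CHAR('a) = p" using pr pk(1) by (simp add: primes_dvd_imp_eq)
  have add: "(x + y) ^ q = x ^ q + y ^ q" for x y :: 'a
    by (rule freshmans_dream'[OF pr]) (simp add: ch pk(3))
  have qpos: "q > 0" using pk(1,3) prime_gt_0_nat by simp
  show ?thesis by unfold_locales (use qpos in \<open>simp_all add: add power_mult_distrib\<close>)
qed

theorem lemma4p1:
  fixes q M :: nat and f :: "'a::{finite,field} poly" and C :: "'a mat"
  assumes "\<exists>p k. prime p \<and> k \<ge> 1 \<and> q = p ^ k"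
    and "card (UNIV :: 'a set) = q ^ 2"
    and "M \<ge> 2"
    and "SCIM q f"
    and "odd (degree f)" and "degree f \<ge> 1"
    and "C \<in> unitary_group q (degree f)"
    and "char_poly C = f"
    and "\<exists>\<alpha> \<in> unitary_group q (degree f). \<alpha> ^\<^sub>m M = C"
  shows "\<exists>g. SCIM q g \<and> degree g = degree f \<and> g dvd pcompose f (monom 1 M)"
proof -
  note q = assms(1) and card = assms(2) and scim = assms(4) and deg1 = assms(6)
    and CU = assms(7) and cpC = assms(8) and al = assms(9)
  define d where "d = degree f"
  have C: "C \<in> carrier_mat d d" using CU by (simp add: unitary_group_def d_def)
  have fC: "ev f C = 0\<^sub>m d d" using cayley_hamilton[OF C] cpC by simp
  have irr: "irreducible f" using scim by (simp add: SCIM_def)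
  interpret cf: cfield C f d by unfold_locales (use C fC irr deg1 in \<open>auto simp: d_def\<close>)
  obtain \<alpha> where aU: "\<alpha> \<in> unitary_group q d" and aM: "\<alpha> ^\<^sub>m M = C" using al d_def by auto
  have a: "\<alpha> \<in> carrier_mat d d" and deta: "det \<alpha> \<noteq> 0"
    and unit: "\<alpha> * antidiag d * transpose_mat (conj_mat q \<alpha>) = antidiag d"
    using aU by (auto simp: unitary_group_def)
  have aM': "ev (monom 1 M) \<alpha> = C" using ev_monom[OF a] aM by simp
  have com: "\<alpha> * C = C * \<alpha>" unfolding aM[symmetric] by (rule pow_mat_comm[OF a])
  obtain p0 where p0: "\<alpha> = ev p0 C" using cf.commutant[OF a com] by blast
  define g where "g = char_poly \<alpha>"
  have dg: "degree g = d" and cg: "coeff g d = 1" using degree_monic_char_poly[OF a] by (auto simp: g_def)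
  have g0: "g \<noteq> 0" using cg by auto
  have ga: "ev g \<alpha> = 0\<^sub>m d d" unfolding g_def by (rule cayley_hamilton[OF a])
  have nosmall: "r = 0" if "degree r < d" "ev r \<alpha> = 0\<^sub>m d d" for r
    using cf.no_small_annihilator[OF a aM', of r] that by blast
  have dvd_of_ann: "g dvd r" if ann: "ev r \<alpha> = 0\<^sub>m d d" for r
  proof -
    have 1: "ev r \<alpha> = ev ((r div g) * g) \<alpha> + ev (r mod g) \<alpha>"
      using ev_add[OF a, of "(r div g) * g" "r mod g"] by simp
    have 2: "ev ((r div g) * g) \<alpha> = 0\<^sub>m d d" using ga a by (simp add: ev_mult[OF a])
    have "ev (r mod g) \<alpha> = 0\<^sub>m d d" using ann a unfolding 1 2 by simp
    moreover have "r mod g = 0 \<or> degree (r mod g) < d" using degree_mod_less'[OF g0] dg by blast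
    ultimately have "r mod g = 0" using nosmall by blast
    thus ?thesis by (simp add: mod_0_imp_dvd)
  qed
  have irrg: "irreducible g"
  proof (rule irreducibleI)
    show "g \<noteq> 0" by (rule g0)
    show "\<not> g dvd 1" using dg deg1 is_unit_iff_degree[OF g0] d_def by simp
    fix b c assume gbc: "g = b * c"
    show "b dvd 1 \<or> c dvd 1"
    proof (rule ccontr)
      assume nu: "\<not> (b dvd 1 \<or> c dvd 1)"
      have b0: "b \<noteq> 0" and c0: "c \<noteq> 0" using gbc g0 by auto
      have "degree b > 0" using nu is_unit_iff_degree[OF b0] by auto
      moreover have "degree c > 0" using nu is_unit_iff_degree[OF c0] by auto
      moreover have "degree b + degree c = d" using gbc dg degree_mult_eq[OF b0 c0] by simp
      ultimately have db: "degree b < d" and dc: "degree c < d" by linarith+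
      have prod: "ev b \<alpha> * ev c \<alpha> = 0\<^sub>m d d" using ga gbc ev_mult[OF a, of b c] by simp
      have eb: "ev b \<alpha> = ev (pcompose b p0) C" using ev_pcompose[OF C] p0 by simp
      show False
      proof (cases "f dvd pcompose b p0")
        case True
        hence "ev b \<alpha> = 0\<^sub>m d d" using eb cf.dvd_imp_zero by simp
        thus False using nosmall[OF db] b0 by simp
      next
        case False
        then obtain U where U: "U \<in> carrier_mat d d" "U * ev (pcompose b p0) C = 1\<^sub>m d" using cf.inv by blast
        have E: "ev b \<alpha> \<in> carrier_mat d d" "ev c \<alpha> \<in> carrier_mat d d" using a by auto
        have e1: "ev c \<alpha> = 1\<^sub>m d * ev c \<alpha>" by (rule left_mult_one_mat[OF E(2), symmetric])
        have e2: "1\<^sub>m d = U * ev b \<alpha>" using U eb by simp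
        have e3: "(U * ev b \<alpha>) * ev c \<alpha> = U * (ev b \<alpha> * ev c \<alpha>)" by (rule assoc_mult_mat[OF U(1) E])
        have "ev c \<alpha> = U * (ev b \<alpha> * ev c \<alpha>)" using e1 unfolding e2 e3 .
        also have "\<dots> = 0\<^sub>m d d" using prod U by simp
        finally show False using nosmall[OF dc] c0 by simp
      qed
    qed
  qed
  have gdvd: "g dvd pcompose f (monom 1 M)"
    by (rule dvd_of_ann) (simp add: ev_pcompose[OF a] aM' fC)
  have gz: "poly g 0 \<noteq> 0"
  proof
    assume "poly g 0 = 0"
    hence "eigenvalue \<alpha> 0" using eigenvalue_root_char_poly[OF a] g_def by simp
    then obtain v where v: "v \<in> carrier_vec d" "v \<noteq> 0\<^sub>v d" "\<alpha> *\<^sub>v v = 0 \<cdot>\<^sub>v v"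
      using a unfolding eigenvalue_def eigenvector_def by auto
    have "\<alpha> *\<^sub>v v = 0\<^sub>v d" using v by (auto intro!: eq_vecI)
    hence "det \<alpha> = 0" using det_0_iff_vec_prod_zero[OF a] v by blast
    thus False using deta by simp
  qed
  define h where "h = (qconj q :: 'a \<Rightarrow> 'a)"
  have hh: "comm_ring_hom h" using frob_hom[OF q card] by (simp add: h_def qconj_def[abs_def])
  interpret hom: comm_ring_hom h by (rule hh)
  have hnz: "h x \<noteq> 0" if "x \<noteq> 0" for x using that by (simp add: h_def qconj_def)
  define L where "L = (antidiag d :: 'a mat)"
  have L: "L \<in> carrier_mat d d" by (simp add: L_def antidiag_def)
  have LL: "L * L = 1\<^sub>m d" by (simp add: L_def antidiag_sq)
  define T where "T = transpose_mat (map_mat h \<alpha>)"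
  have Tc: "T \<in> carrier_mat d d" using a by (simp add: T_def)
  have unit': "\<alpha> * L * T = L" using unit by (simp add: T_def L_def conj_mat_def h_def)
  define \<beta> where "\<beta> = L * T * L"
  have LT: "L * T \<in> carrier_mat d d" by (rule mult_carrier_mat[OF L Tc])
  have b: "\<beta> \<in> carrier_mat d d" unfolding \<beta>_def by (rule mult_carrier_mat[OF LT L])
  have aL: "\<alpha> * L \<in> carrier_mat d d" by (rule mult_carrier_mat[OF a L])
  have ab: "\<alpha> * \<beta> = 1\<^sub>m d"
  proof -
    have "\<alpha> * \<beta> = \<alpha> * (L * T) * L" unfolding \<beta>_def by (rule assoc_mult_mat[OF a LT L, symmetric])
    also have "\<alpha> * (L * T) = \<alpha> * L * T" by (rule assoc_mult_mat[OF a L Tc, symmetric])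
    finally show ?thesis using unit' LL by simp
  qed
  define cgp where "cgp = map_poly h g"
  have "ev cgp \<beta> = L * ev cgp T * L" unfolding \<beta>_def by (rule ev_similar[OF Tc L L LL LL])
  also have "ev cgp T = transpose_mat (ev cgp (map_mat h \<alpha>))" unfolding T_def
    by (rule ev_transpose) (use a in simp)
  also have "ev cgp (map_mat h \<alpha>) = map_mat h (ev g \<alpha>)" unfolding cgp_def by (rule ev_hom[OF hh a, symmetric])
  also have "map_mat h (ev g \<alpha>) = 0\<^sub>m d d" unfolding ga by (rule eq_matI) auto
  finally have cgb: "ev cgp \<beta> = 0\<^sub>m d d" using L by simp
  have "ev (reflect_poly cgp) \<alpha> = \<alpha> ^\<^sub>m degree cgp * ev cgp \<beta>" by (rule ev_reflect[OF a b ab])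
  also have "\<dots> = 0\<^sub>m d d" unfolding cgb using a by simp
  finally have rz: "ev (reflect_poly cgp) \<alpha> = 0\<^sub>m d d" .
  have tdef: "tilde_poly q g = Polynomial.smult (inverse (h (poly g 0))) (reflect_poly cgp)"
    by (simp add: tilde_poly_def conj_poly_def cgp_def h_def)
  have "ev (tilde_poly q g) \<alpha> = 0\<^sub>m d d" unfolding tdef by (simp add: ev_smult[OF a] rz)
  hence "g dvd tilde_poly q g" by (rule dvd_of_ann)
  then obtain k where Tk: "tilde_poly q g = g * k" by (elim dvdE)
  have "degree (map_poly h g) = degree g" by (rule Polynomial.degree_map_poly) (rule hnz)
  hence dcg: "degree cgp = d" unfolding cgp_def using dg by simp
  have "coeff (map_poly h g) 0 = h (coeff g 0)" by (rule Polynomial.coeff_map_poly) simp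
  hence c0: "coeff cgp 0 = h (poly g 0)" unfolding cgp_def by (simp add: poly_0_coeff_0)
  have ct: "coeff (tilde_poly q g) d = 1"
    unfolding tdef using dcg c0 gz hnz by (simp add: coeff_reflect_poly)
  have dt: "degree (tilde_poly q g) \<le> d"
    unfolding tdef using degree_reflect_poly_le[of cgp] dcg by simp
  have tg: "tilde_poly q g = g"
  proof -
    have t0: "tilde_poly q g \<noteq> 0" using ct by auto
    hence k0: "k \<noteq> 0" using Tk by auto
    have "degree (tilde_poly q g) = d + degree k" using Tk degree_mult_eq[OF g0 k0] dg by simp
    hence "degree k = 0" using dt by simp
    hence kk: "k = [:coeff k 0:]" by (metis degree_0_id)
    have "coeff (tilde_poly q g) d = coeff g d * coeff k 0" unfolding Tk by (subst kk) simp
    hence "coeff k 0 = 1" using ct cg by simp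
    thus ?thesis using Tk kk by simp
  qed
  have "SCIM q g" unfolding SCIM_def using cg dg gz irrg tg by simp
  thus ?thesis using dg gdvd d_def by blast
qed

end
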